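(* Let $M\in\mathbb{R}^{(\ell+1)\times(\ell+1)}$ have all entries nonnegative, $\lambda\in\mathbb{R}$, and $x\in\mathbb{R}^{\ell+1}$ with all entries strictly positive, such that $Mx=\lambda x$. Let $\overline{L}:=\lambda I_\ell-\overline{M}$. (i) Then $\lambda\ge0$ and $\overline{M}\,\overline{x}\le\lambda\overline{x}$ entrywise; consequently $\overline{L}\,\overline{x}\ge0$. (ii) If moreover the last column of $M$ has all entries strictly positive, then $\overline{M}\,\overline{x}<\lambda\overline{x}$ entrywise, and consequently $\overline{L}$ is a nonsingular $M$-matrix. (iii) Let $t$ be a positive integer and $\overline{y}:=\sum_{k=0}^{t-1}\overline{M}^k\overline{x}$. Then $\overline{y}$ has all entries strictly positive. If moreover the last column of $\sum_{k=0}^{t-1}M^k$ has all entries strictly positive, then $\overline{M}\,\overline{y}<\lambda\overline{y}$ entrywise, and consequently $\overline{L}$ is a nonsingular $M$-matrix.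
   Context: For $x\in\mathbb{R}^{\ell+1}$, $\overline{x}\in\mathbb{R}^\ell$ denotes $x$ with its last coordinate removed; for $M\in\mathbb{R}^{(\ell+1)\times(\ell+1)}$, $\overline{M}\in\mathbb{R}^{\ell\times\ell}$ denotes $M$ with its last row and last column removed. Inequalities $u\le v$ (resp. $u<v$) between vectors are entrywise. A matrix $Q\in\mathbb{R}^{\ell\times\ell}$ with nonpositive off-diagonal entries is a nonsingular $M$-matrix if it is invertible and $Q^{-1}$ has all entries nonnegative. *)

theory Defs
  imports "Jordan_Normal_Form.Matrix"
begin

text \<open>Remove the last row and last column of a matrix (the paper's overline on matrices).\<close>
definition trunc_mat :: "real mat \<Rightarrow> real mat" where
  "trunc_mat M = mat (dim_row M - 1) (dim_col M - 1) (\<lambda>(i,j). M $$ (i,j))"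

text \<open>Remove the last coordinate of a vector (the paper's overline on vectors).\<close>
definition trunc_vec :: "real vec \<Rightarrow> real vec" where
  "trunc_vec x = vec (dim_vec x - 1) (\<lambda>i. x $ i)"

definition nonsingular_M_matrix :: "nat \<Rightarrow> real mat \<Rightarrow> bool" where
  "nonsingular_M_matrix n Q \<longleftrightarrow>
     Q \<in> carrier_mat n n \<and>
     (\<forall>i<n. \<forall>j<n. i \<noteq> j \<longrightarrow> Q $$ (i,j) \<le> 0) \<and>
     (\<exists>B. B \<in> carrier_mat n n \<and> inverts_mat Q B \<and> inverts_mat B Q \<and>
          (\<forall>i<n. \<forall>j<n. 0 \<le> B $$ (i,j)))"

end

theory Submission
  imports Defs "Jordan_Normal_Form.Determinant"
begin

lemma mv_idx:
  assumes "A \<in> carrier_mat n m" "v \<in> carrier_vec m" "i < n"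
  shows "(A *\<^sub>v v) $ i = (\<Sum>j<m. A $$ (i,j) * v $ j)"
  using assms by (simp add: scalar_prod_def atLeast0LessThan)

lemma pow_mat_Suc_left:
  assumes "A \<in> carrier_mat n n"
  shows "A ^\<^sub>m (Suc k) = A * A ^\<^sub>m k"
proof (induction k)
  case 0 then show ?case using assms by simp
next
  case (Suc k)
  have "A ^\<^sub>m Suc (Suc k) = (A * A ^\<^sub>m k) * A" using Suc by simp
  also have "\<dots> = A * (A ^\<^sub>m k * A)" using assms by (simp add: assoc_mult_mat[of _ n n _ n _ n])
  finally show ?case by simp
qed

lemma nonneg_mv:
  assumes "A \<in> carrier_mat n m" "v \<in> carrier_vec m"
    "\<forall>i<n. \<forall>j<m. 0 \<le> A $$ (i,j)" "\<forall>j<m. 0 \<le> (v $ j :: real)" "i < n"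
  shows "0 \<le> (A *\<^sub>v v) $ i"
  using assms by (subst mv_idx[OF assms(1,2,5)]) (auto intro!: sum_nonneg mult_nonneg_nonneg)

lemma nonneg_pow:
  assumes "A \<in> carrier_mat n n" "\<forall>i<n. \<forall>j<n. 0 \<le> (A $$ (i,j) :: real)"
  shows "\<forall>i<n. \<forall>j<n. 0 \<le> (A ^\<^sub>m k) $$ (i,j)"
proof (induction k)
  case 0 then show ?case using assms by simp
next
  case (Suc k)
  show ?case
  proof (intro allI impI)
    fix i j assume ij: "i < n" "j < n"
    have "(A ^\<^sub>m Suc k) $$ (i,j) = (\<Sum>p<n. (A ^\<^sub>m k) $$ (i,p) * A $$ (p,j))"
      using assms ij by (simp add: scalar_prod_def atLeast0LessThan)
    also have "\<dots> \<ge> 0" using Suc assms ij by (intro sum_nonneg) simp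
    finally show "0 \<le> (A ^\<^sub>m Suc k) $$ (i,j)" .
  qed
qed

lemma units_inverts:
  assumes "(Q::real mat) \<in> carrier_mat n n" "\<forall>v. v \<in> carrier_vec n \<and> Q *\<^sub>v v = 0\<^sub>v n \<longrightarrow> v = 0\<^sub>v n"
  shows "\<exists>B. B \<in> carrier_mat n n \<and> Q * B = 1\<^sub>m n \<and> B * Q = 1\<^sub>m n"
proof -
  have "det Q \<noteq> 0" using det_0_iff_vec_prod_zero_field[OF assms(1)] assms(2) by blast
  then have "Q \<in> Units (ring_mat TYPE(real) n ())" by (rule det_non_zero_imp_unit[OF assms(1)])
  then show ?thesis unfolding Units_def by (auto simp: ring_mat_simps)
qed

lemma comparison:
  assumes Q: "(Q::real mat) \<in> carrier_mat n n"
    and offd: "\<forall>i<n. \<forall>j<n. i \<noteq> j \<longrightarrow> Q $$ (i,j) \<le> 0"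
    and y: "y \<in> carrier_vec n" "\<forall>i<n. 0 < y $ i" "\<forall>i<n. 0 < (Q *\<^sub>v y) $ i"
    and z: "z \<in> carrier_vec n" "\<forall>i<n. 0 \<le> (Q *\<^sub>v z) $ i"
  shows "\<forall>i<n. 0 \<le> z $ i"
proof (rule ccontr)
  assume "\<not> ?thesis"
  then obtain i1 where i1: "i1 < n" "z $ i1 < 0" by auto
  define F where "F = (\<lambda>j. z $ j / y $ j)"
  define r where "r = Min (F ` {..<n})"
  have fin: "finite (F ` {..<n})" and ne: "F ` {..<n} \<noteq> {}" using i1 by auto
  obtain i0 where i0: "i0 < n" "r = F i0" using Min_in[OF fin ne] unfolding r_def by auto
  have rle: "\<And>j. j < n \<Longrightarrow> r \<le> F j" unfolding r_def using fin by auto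
  have "F i1 < 0" using i1 y unfolding F_def by (simp add: divide_neg_pos)
  then have rneg: "r < 0" using rle[OF i1(1)] by simp
  have wnn: "\<And>j. j < n \<Longrightarrow> 0 \<le> z $ j - r * y $ j"
  proof -
    fix j assume j: "j < n"
    have "r \<le> z $ j / y $ j" using rle[OF j] unfolding F_def .
    then have "r * y $ j \<le> z $ j" using y j by (simp add: pos_le_divide_eq)
    then show "0 \<le> z $ j - r * y $ j" by simp
  qed
  have yi0: "0 < y $ i0" using y(2) i0 by simp
  have w0: "z $ i0 - r * y $ i0 = 0" using i0 yi0 by (simp add: F_def)
  have "(\<Sum>j<n. Q $$ (i0,j) * (z $ j - r * y $ j)) = (Q *\<^sub>v z) $ i0 - r * (Q *\<^sub>v y) $ i0"
    unfolding mv_idx[OF Q z(1) i0(1)] mv_idx[OF Q y(1) i0(1)]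
    by (simp add: algebra_simps sum_subtractf sum_distrib_left)
  also have "\<dots> > 0"
  proof -
    have "r * (Q *\<^sub>v y) $ i0 < 0" using rneg y(3) i0 by (simp add: mult_neg_pos)
    moreover have "0 \<le> (Q *\<^sub>v z) $ i0" using z(2) i0(1) by simp
    ultimately show ?thesis by linarith
  qed
  finally have pos: "(\<Sum>j<n. Q $$ (i0,j) * (z $ j - r * y $ j)) > 0" .
  have "(\<Sum>j<n. Q $$ (i0,j) * (z $ j - r * y $ j)) \<le> 0"
  proof (rule sum_nonpos)
    fix j assume "j \<in> {..<n}"
    then have j: "j < n" by simp
    show "Q $$ (i0,j) * (z $ j - r * y $ j) \<le> 0"
    proof (cases "j = i0")
      case True then show ?thesis using w0 by simp
    next
      case False then show ?thesis using offd i0 j wnn[OF j] by (simp add: mult_nonpos_nonneg)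
    qed
  qed
  then show False using pos by simp
qed

lemma Zlemma:
  assumes Q: "(Q::real mat) \<in> carrier_mat n n"
    and offd: "\<forall>i<n. \<forall>j<n. i \<noteq> j \<longrightarrow> Q $$ (i,j) \<le> 0"
    and y: "y \<in> carrier_vec n" "\<forall>i<n. 0 < y $ i" "\<forall>i<n. 0 < (Q *\<^sub>v y) $ i"
  shows "nonsingular_M_matrix n Q"
proof -
  have inj: "\<forall>v. v \<in> carrier_vec n \<and> Q *\<^sub>v v = 0\<^sub>v n \<longrightarrow> v = 0\<^sub>v n"
  proof (intro allI impI)
    fix v assume v: "v \<in> carrier_vec n \<and> Q *\<^sub>v v = 0\<^sub>v n"
    have a: "\<forall>i<n. 0 \<le> v $ i" using comparison[OF Q offd y, of v] v by simp
    have mv: "-v \<in> carrier_vec n" using v by simp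
    have "\<forall>i<n. 0 \<le> (Q *\<^sub>v (-v)) $ i"
    proof (intro allI impI)
      fix i assume i: "i < n"
      have e: "(\<Sum>j<n. Q $$ (i,j) * (-v) $ j) = (\<Sum>j<n. - (Q $$ (i,j) * v $ j))"
        using v by (intro sum.cong) auto
      have "(Q *\<^sub>v (-v)) $ i = - (Q *\<^sub>v v) $ i"
        using mv_idx[OF Q mv i] mv_idx[OF Q _ i, of v] v e by (simp add: sum_negf)
      then show "0 \<le> (Q *\<^sub>v (-v)) $ i" using v i by simp
    qed
    then have b: "\<forall>i<n. 0 \<le> (-v) $ i" using comparison[OF Q offd y mv] by blast
    show "v = 0\<^sub>v n"
      by (rule eq_vecI) (use a b v in \<open>auto intro: order.antisym\<close>)
  qed
  obtain B where B: "B \<in> carrier_mat n n" "Q * B = 1\<^sub>m n" "B * Q = 1\<^sub>m n"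
    using units_inverts[OF Q inj] by blast
  have Bnn: "\<forall>i<n. \<forall>j<n. 0 \<le> B $$ (i,j)"
  proof (intro allI impI)
    fix i j assume ij: "i < n" "j < n"
    have c: "Q *\<^sub>v col B j = unit_vec n j"
      using col_mult2[OF Q B(1) ij(2)] B(2) ij by (simp del: col_mult2)
    have "\<forall>i<n. 0 \<le> col B j $ i"
      by (rule comparison[OF Q offd y]) (use B ij c in auto)
    then show "0 \<le> B $$ (i,j)" using B ij by simp
  qed
  show ?thesis unfolding nonsingular_M_matrix_def inverts_mat_def
    using Q offd B Bnn by auto
qed

theorem proposition6p7:
  fixes l :: nat and M :: "real mat" and lam :: real and x :: "real vec"
  assumes M_carrier: "M \<in> carrier_mat (l+1) (l+1)"
    and M_nonneg: "\<forall>i<l+1. \<forall>j<l+1. 0 \<le> M $$ (i,j)"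
    and x_carrier: "x \<in> carrier_vec (l+1)"
    and x_pos: "\<forall>i<l+1. 0 < x $ i"
    and eig: "M *\<^sub>v x = lam \<cdot>\<^sub>v x"
  defines "Lb \<equiv> lam \<cdot>\<^sub>m 1\<^sub>m l - trunc_mat M"
  shows
    \<comment> \<open>(i)\<close>
    "(0 \<le> lam \<and>
      (\<forall>i<l. (trunc_mat M *\<^sub>v trunc_vec x) $ i \<le> lam * trunc_vec x $ i) \<and>
      (\<forall>i<l. 0 \<le> (Lb *\<^sub>v trunc_vec x) $ i))
     \<and>
     \<comment> \<open>(ii)\<close>
     ((\<forall>i<l+1. 0 < M $$ (i,l)) \<longrightarrow>
        (\<forall>i<l. (trunc_mat M *\<^sub>v trunc_vec x) $ i < lam * trunc_vec x $ i) \<and>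
        nonsingular_M_matrix l Lb)
     \<and>
     \<comment> \<open>(iii)\<close>
     (\<forall>t::nat. 0 < t \<longrightarrow>
        (let yb = vec l (\<lambda>i. \<Sum>k<t. ((trunc_mat M ^\<^sub>m k) *\<^sub>v trunc_vec x) $ i) in
          (\<forall>i<l. 0 < yb $ i) \<and>
          ((\<forall>i<l+1. 0 < (\<Sum>k<t. (M ^\<^sub>m k) $$ (i,l))) \<longrightarrow>
             (\<forall>i<l. (trunc_mat M *\<^sub>v yb) $ i < lam * yb $ i) \<and>
             nonsingular_M_matrix l Lb)))"
proof -
  define Mb where "Mb = trunc_mat M"
  define xb where "xb = trunc_vec x"
  have dM: "dim_row M = l+1" "dim_col M = l+1" using M_carrier by auto
  have dx: "dim_vec x = l+1" using x_carrier by auto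
  have Mb_c: "Mb \<in> carrier_mat l l" unfolding Mb_def trunc_mat_def using dM by simp
  have Mb_e: "\<And>i j. i < l \<Longrightarrow> j < l \<Longrightarrow> Mb $$ (i,j) = M $$ (i,j)"
    unfolding Mb_def trunc_mat_def using dM by simp
  have Mb_nn: "\<forall>i<l. \<forall>j<l. 0 \<le> Mb $$ (i,j)" using Mb_e M_nonneg by simp
  have xb_c: "xb \<in> carrier_vec l" unfolding xb_def trunc_vec_def using dx by simp
  have xb_e: "\<And>i. i < l \<Longrightarrow> xb $ i = x $ i" unfolding xb_def trunc_vec_def using dx by simp
  have xb_pos: "\<forall>i<l. 0 < xb $ i" using xb_e x_pos by simp
  have xl: "0 < x $ l" using x_pos by simp
  have Mx: "\<And>i. i < l+1 \<Longrightarrow> (\<Sum>j<l+1. M $$ (i,j) * x $ j) = lam * x $ i"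
  proof -
    fix i assume i: "i < l+1"
    have "(M *\<^sub>v x) $ i = lam * x $ i" using eig i dx by simp
    then show "(\<Sum>j<l+1. M $$ (i,j) * x $ j) = lam * x $ i"
      using mv_idx[OF M_carrier x_carrier i] by simp
  qed
  have lam_nn: "0 \<le> lam"
  proof -
    have "0 \<le> (\<Sum>j<l+1. M $$ (0,j) * x $ j)"
    proof (rule sum_nonneg)
      fix j assume "j \<in> {..<l+1}"
      then have "0 \<le> M $$ (0,j)" "0 \<le> x $ j" using M_nonneg x_pos less_imp_le by auto
      then show "0 \<le> M $$ (0,j) * x $ j" by simp
    qed
    then have "0 \<le> lam * x $ 0" using Mx[of 0] by simp
    moreover have "0 < x $ 0" using x_pos by simp
    ultimately show ?thesis by (simp add: zero_le_mult_iff)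
  qed
  define c where "c = vec l (\<lambda>i. M $$ (i,l))"
  have c_c: "c \<in> carrier_vec l" unfolding c_def by simp
  have c_nn: "\<forall>i<l. 0 \<le> c $ i" unfolding c_def using M_nonneg by simp
  have E: "\<And>i. i < l \<Longrightarrow> (Mb *\<^sub>v xb) $ i = lam * xb $ i - x $ l * c $ i"
  proof -
    fix i assume i: "i < l"
    have "(Mb *\<^sub>v xb) $ i = (\<Sum>j<l. M $$ (i,j) * x $ j)"
      unfolding mv_idx[OF Mb_c xb_c i] using i Mb_e xb_e by (intro sum.cong) auto
    also have "\<dots> = lam * x $ i - M $$ (i,l) * x $ l"
      using Mx[of i] i by simp
    finally show "(Mb *\<^sub>v xb) $ i = lam * xb $ i - x $ l * c $ i"
      using i xb_e c_def by simp
  qed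
  have Lb_c: "Lb \<in> carrier_mat l l" unfolding Lb_def Mb_def[symmetric] using Mb_c by (rule minus_carrier_mat)
  have Lb_e: "\<And>i j. i < l \<Longrightarrow> j < l \<Longrightarrow> Lb $$ (i,j) = (if i = j then lam else 0) - Mb $$ (i,j)"
    unfolding Lb_def Mb_def[symmetric] using Mb_c by simp
  have Lb_off: "\<forall>i<l. \<forall>j<l. i \<noteq> j \<longrightarrow> Lb $$ (i,j) \<le> 0" using Lb_e Mb_nn by simp
  have Lb_mv: "\<And>v i. v \<in> carrier_vec l \<Longrightarrow> i < l \<Longrightarrow> (Lb *\<^sub>v v) $ i = lam * v $ i - (Mb *\<^sub>v v) $ i"
  proof -
    fix v :: "real vec" and i assume v: "v \<in> carrier_vec l" and i: "i < l"
    have "(Lb *\<^sub>v v) $ i = (\<Sum>j<l. (if i = j then lam * v $ j else 0) - Mb $$ (i,j) * v $ j)"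
      unfolding mv_idx[OF Lb_c v i] by (intro sum.cong) (auto simp: Lb_e[OF i] left_diff_distrib)
    also have "\<dots> = lam * v $ i - (Mb *\<^sub>v v) $ i"
      unfolding mv_idx[OF Mb_c v i] sum_subtractf using i by simp
    finally show "(Lb *\<^sub>v v) $ i = lam * v $ i - (Mb *\<^sub>v v) $ i" .
  qed
  have part1: "0 \<le> lam \<and>
      (\<forall>i<l. (trunc_mat M *\<^sub>v trunc_vec x) $ i \<le> lam * trunc_vec x $ i) \<and>
      (\<forall>i<l. 0 \<le> (Lb *\<^sub>v trunc_vec x) $ i)"
    unfolding Mb_def[symmetric] xb_def[symmetric]
    using lam_nn E Lb_mv[OF xb_c] c_nn xl by (auto intro: mult_nonneg_nonneg)
  have part2: "(\<forall>i<l+1. 0 < M $$ (i,l)) \<longrightarrow>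
        (\<forall>i<l. (trunc_mat M *\<^sub>v trunc_vec x) $ i < lam * trunc_vec x $ i) \<and>
        nonsingular_M_matrix l Lb"
  proof
    assume h: "\<forall>i<l+1. 0 < M $$ (i,l)"
    have s: "\<forall>i<l. 0 < x $ l * c $ i" using h xl unfolding c_def by simp
    have a: "\<forall>i<l. (Mb *\<^sub>v xb) $ i < lam * xb $ i" using E s by simp
    have "\<forall>i<l. 0 < (Lb *\<^sub>v xb) $ i" using a Lb_mv[OF xb_c] by simp
    then have "nonsingular_M_matrix l Lb" using Zlemma[OF Lb_c Lb_off xb_c xb_pos] by blast
    then show "(\<forall>i<l. (trunc_mat M *\<^sub>v trunc_vec x) $ i < lam * trunc_vec x $ i) \<and>
        nonsingular_M_matrix l Lb" using a unfolding Mb_def xb_def by simp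
  qed
  define u where "u = (\<lambda>k. (Mb ^\<^sub>m k) *\<^sub>v xb)"
  define w where "w = (\<lambda>k. (Mb ^\<^sub>m k) *\<^sub>v c)"
  have u_c: "\<And>k. u k \<in> carrier_vec l" unfolding u_def by (rule mult_mat_vec_carrier[OF pow_carrier_mat[OF Mb_c] xb_c])
  have w_c: "\<And>k. w k \<in> carrier_vec l" unfolding w_def by (rule mult_mat_vec_carrier[OF pow_carrier_mat[OF Mb_c] c_c])
  have u_nn: "\<And>k i. i < l \<Longrightarrow> 0 \<le> u k $ i" unfolding u_def
    using nonneg_mv[OF pow_carrier_mat[OF Mb_c] xb_c nonneg_pow[OF Mb_c Mb_nn]] xb_pos
    by (simp add: less_imp_le)
  have w_nn: "\<And>k i. i < l \<Longrightarrow> 0 \<le> w k $ i" unfolding w_def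
    using nonneg_mv[OF pow_carrier_mat[OF Mb_c] c_c nonneg_pow[OF Mb_c Mb_nn]] c_nn
    by simp
  have u0: "u 0 = xb" unfolding u_def using Mb_c xb_c by simp
  have w0: "w 0 = c" unfolding w_def using Mb_c c_c by simp
  have uS: "\<And>k. u (Suc k) = Mb *\<^sub>v u k"
    unfolding u_def pow_mat_Suc_left[OF Mb_c] by (rule assoc_mult_mat_vec[OF Mb_c pow_carrier_mat[OF Mb_c] xb_c])
  have wS: "\<And>k. w (Suc k) = Mb *\<^sub>v w k"
    unfolding w_def pow_mat_Suc_left[OF Mb_c] by (rule assoc_mult_mat_vec[OF Mb_c pow_carrier_mat[OF Mb_c] c_c])
  have uS2: "\<And>k i. i < l \<Longrightarrow> u (Suc k) $ i = lam * u k $ i - x $ l * w k $ i"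
  proof -
    fix k i assume i: "i < l"
    let ?P = "Mb ^\<^sub>m k"
    have P: "?P \<in> carrier_mat l l" using Mb_c by simp
    have "u (Suc k) = ?P *\<^sub>v (Mb *\<^sub>v xb)" unfolding u_def pow_mat.simps(2)
      by (rule assoc_mult_mat_vec[OF P Mb_c xb_c])
    then have "u (Suc k) $ i = (\<Sum>j<l. ?P $$ (i,j) * (Mb *\<^sub>v xb) $ j)"
      using mv_idx[OF P _ i, of "Mb *\<^sub>v xb"] Mb_c xb_c by simp
    also have "\<dots> = (\<Sum>j<l. ?P $$ (i,j) * (lam * xb $ j - x $ l * c $ j))"
      using E by (intro sum.cong) auto
    also have "\<dots> = lam * (\<Sum>j<l. ?P $$ (i,j) * xb $ j) - x $ l * (\<Sum>j<l. ?P $$ (i,j) * c $ j)"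
      by (simp add: algebra_simps sum_subtractf sum_distrib_left)
    also have "\<dots> = lam * u k $ i - x $ l * w k $ i"
      unfolding u_def w_def using mv_idx[OF P xb_c i] mv_idx[OF P c_c i] by simp
    finally show "u (Suc k) $ i = lam * u k $ i - x $ l * w k $ i" .
  qed
  have path: "\<And>k. \<forall>i<l. 0 < (M ^\<^sub>m k) $$ (i,l) \<longrightarrow> (\<exists>m<k. 0 < w m $ i)"
  proof -
    fix k show "\<forall>i<l. 0 < (M ^\<^sub>m k) $$ (i,l) \<longrightarrow> (\<exists>m<k. 0 < w m $ i)"
    proof (induction k)
      case 0 then show ?case using dM by simp
    next
      case (Suc k)
      show ?case
      proof (intro allI impI)
        fix i assume i: "i < l" and pos: "0 < (M ^\<^sub>m Suc k) $$ (i,l)"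
        have Pk: "M ^\<^sub>m k \<in> carrier_mat (l+1) (l+1)" using M_carrier by simp
        have Pnn: "\<forall>i<l+1. \<forall>j<l+1. 0 \<le> (M ^\<^sub>m k) $$ (i,j)" using nonneg_pow[OF M_carrier M_nonneg] .
        have "(M ^\<^sub>m Suc k) $$ (i,l) = (\<Sum>j<l+1. M $$ (i,j) * (M ^\<^sub>m k) $$ (j,l))"
          unfolding pow_mat_Suc_left[OF M_carrier] using M_carrier Pk i
          by (simp add: scalar_prod_def atLeast0LessThan)
        with pos have "\<exists>j<l+1. 0 < M $$ (i,j) * (M ^\<^sub>m k) $$ (j,l)"
          by (metis (no_types, lifting) lessThan_iff not_le sum_nonpos)
        then obtain j where j: "j < l+1" "0 < M $$ (i,j) * (M ^\<^sub>m k) $$ (j,l)" by blast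
        have nn: "0 \<le> M $$ (i,j)" "0 \<le> (M ^\<^sub>m k) $$ (j,l)"
          using j(1) M_nonneg Pnn i by auto
        have Mij: "0 < M $$ (i,j)" and Pjl: "0 < (M ^\<^sub>m k) $$ (j,l)"
          using j(2) nn by (auto simp: zero_less_mult_iff)
        show "\<exists>m<Suc k. 0 < w m $ i"
        proof (cases "j = l")
          case True
          have "0 < w 0 $ i" using w0 Mij True i unfolding c_def by simp
          then show ?thesis by blast
        next
          case False
          then have jl: "j < l" using j by simp
          then obtain m where m: "m < k" "0 < w m $ j" using Suc.IH Pjl by blast
          have "w (Suc m) $ i = (\<Sum>p<l. Mb $$ (i,p) * w m $ p)"
            using wS mv_idx[OF Mb_c w_c i] by simp
          also have "\<dots> > 0"
            by (rule sum_pos2[of _ j]) (use jl m Mb_e i Mij Mb_nn w_nn in \<open>auto intro: mult_nonneg_nonneg\<close>)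
          finally show ?thesis using m by (intro exI[of _ "Suc m"]) simp
        qed
      qed
    qed
  qed
  have part3: "\<forall>t::nat. 0 < t \<longrightarrow>
        (let yb = vec l (\<lambda>i. \<Sum>k<t. ((trunc_mat M ^\<^sub>m k) *\<^sub>v trunc_vec x) $ i) in
          (\<forall>i<l. 0 < yb $ i) \<and>
          ((\<forall>i<l+1. 0 < (\<Sum>k<t. (M ^\<^sub>m k) $$ (i,l))) \<longrightarrow>
             (\<forall>i<l. (trunc_mat M *\<^sub>v yb) $ i < lam * yb $ i) \<and>
             nonsingular_M_matrix l Lb))"
  proof (intro allI impI)
    fix t :: nat assume t: "0 < t"
    define yb where "yb = vec l (\<lambda>i. \<Sum>k<t. u k $ i)"
    have yb_c: "yb \<in> carrier_vec l" unfolding yb_def by simp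
    have yb_e: "\<And>i. i < l \<Longrightarrow> yb $ i = (\<Sum>k<t. u k $ i)" unfolding yb_def by simp
    have yb_pos: "\<forall>i<l. 0 < yb $ i"
    proof (intro allI impI)
      fix i assume i: "i < l"
      have "0 < (\<Sum>k<t. u k $ i)"
        by (rule sum_pos2[of _ 0]) (use t i u0 xb_pos u_nn in auto)
      then show "0 < yb $ i" using yb_e i by simp
    qed
    have Myb: "\<And>i. i < l \<Longrightarrow> lam * yb $ i - (Mb *\<^sub>v yb) $ i = x $ l * (\<Sum>k<t. w k $ i)"
    proof -
      fix i assume i: "i < l"
      have "(Mb *\<^sub>v yb) $ i = (\<Sum>j<l. Mb $$ (i,j) * (\<Sum>k<t. u k $ j))"
        unfolding mv_idx[OF Mb_c yb_c i] using yb_e by (intro sum.cong) auto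
      also have "\<dots> = (\<Sum>k<t. \<Sum>j<l. Mb $$ (i,j) * u k $ j)"
        by (simp add: sum_distrib_left sum.swap[of _ "{..<l}"])
      also have "\<dots> = (\<Sum>k<t. u (Suc k) $ i)"
        using uS mv_idx[OF Mb_c u_c i] by simp
      also have "\<dots> = (\<Sum>k<t. lam * u k $ i - x $ l * w k $ i)"
        using uS2 i by simp
      finally show "lam * yb $ i - (Mb *\<^sub>v yb) $ i = x $ l * (\<Sum>k<t. w k $ i)"
        using yb_e i by (simp add: sum_subtractf sum_distrib_left)
    qed
    have impl: "(\<forall>i<l+1. 0 < (\<Sum>k<t. (M ^\<^sub>m k) $$ (i,l))) \<longrightarrow>
             (\<forall>i<l. (Mb *\<^sub>v yb) $ i < lam * yb $ i) \<and>
             nonsingular_M_matrix l Lb"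
    proof
      assume h: "\<forall>i<l+1. 0 < (\<Sum>k<t. (M ^\<^sub>m k) $$ (i,l))"
      have a: "\<forall>i<l. (Mb *\<^sub>v yb) $ i < lam * yb $ i"
      proof (intro allI impI)
        fix i assume i: "i < l"
        have "0 < (\<Sum>k<t. (M ^\<^sub>m k) $$ (i,l))" using h i by simp
        then obtain k where k: "k < t" "0 < (M ^\<^sub>m k) $$ (i,l)"
          by (metis (no_types, lifting) lessThan_iff not_le sum_nonpos)
        then obtain m where m: "m < k" "0 < w m $ i" using path i by blast
        have "0 < (\<Sum>k<t. w k $ i)"
          by (rule sum_pos2[of _ m]) (use m k w_nn i in auto)
        then have "0 < x $ l * (\<Sum>k<t. w k $ i)" using xl by simp
        then show "(Mb *\<^sub>v yb) $ i < lam * yb $ i" using Myb[OF i] by simp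
      qed
      have "\<forall>i<l. 0 < (Lb *\<^sub>v yb) $ i" using a Lb_mv[OF yb_c] by simp
      then have "nonsingular_M_matrix l Lb" using Zlemma[OF Lb_c Lb_off yb_c yb_pos] by blast
      then show "(\<forall>i<l. (Mb *\<^sub>v yb) $ i < lam * yb $ i) \<and> nonsingular_M_matrix l Lb"
        using a by simp
    qed
    then show "let yb = vec l (\<lambda>i. \<Sum>k<t. ((trunc_mat M ^\<^sub>m k) *\<^sub>v trunc_vec x) $ i) in
          (\<forall>i<l. 0 < yb $ i) \<and>
          ((\<forall>i<l+1. 0 < (\<Sum>k<t. (M ^\<^sub>m k) $$ (i,l))) \<longrightarrow>
             (\<forall>i<l. (trunc_mat M *\<^sub>v yb) $ i < lam * yb $ i) \<and>
             nonsingular_M_matrix l Lb)"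
    proof -
      have yeq: "vec l (\<lambda>i. \<Sum>k<t. ((trunc_mat M ^\<^sub>m k) *\<^sub>v trunc_vec x) $ i) = yb"
        unfolding yb_def u_def Mb_def xb_def by simp
      show ?thesis using yb_pos impl unfolding yb_def u_def Mb_def xb_def Let_def by simp
    qed
  qed
  show ?thesis using part1 part2 part3 by blast
qed

end
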